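(* Let $d>0$ and let $\triangle ABC$ be a geodesic triangle in hyperbolic space. Suppose that for each vertex $V\in\{A,B,C\}$, the ball of radius $d+\operatorname{arccosh}(2/\sqrt3)$ centered at $V$ is separated by a hyperplane from the other two vertices. Then the Fermat point $F$ of $\triangle ABC$ lies inside the triangle and $|FA|,|FB|,|FC|$ are all greater than $d$.
   Context: The Fermat point of a geodesic triangle $\triangle ABC$ is the point $F$ of the $2$-simplex spanned by the triangle minimizing $|FA|+|FB|+|FC|$. *)

theory Defs
  imports "HOL-Analysis.Analysis"
begin

text \<open>Hyperboloid model of hyperbolic space of dimension DIM('a):
  ambient Minkowski space is real x 'a, with the Lorentzian form
  minner (t,x) (s,y) = x . y - t s.\<close>

definition minner :: "real \<times> 'a::real_inner \<Rightarrow> real \<times> 'a \<Rightarrow> real" where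
  "minner p q = snd p \<bullet> snd q - fst p * fst q"

definition hyp_space :: "(real \<times> 'a::real_inner) set" where
  "hyp_space = {p. fst p > 0 \<and> minner p p = -1}"

definition hdist :: "real \<times> 'a::real_inner \<Rightarrow> real \<times> 'a \<Rightarrow> real" where
  "hdist p q = arcosh (- minner p q)"

definition hball :: "real \<times> 'a::real_inner \<Rightarrow> real \<Rightarrow> (real \<times> 'a) set" where
  "hball V r = {p \<in> hyp_space. hdist V p \<le> r}"

text \<open>A hyperbolic hyperplane is the intersection of hyp_space with a linear
  hyperplane {p. minner p v = 0} with spacelike normal v (minner v v > 0).\<close>
definition hyp_separated :: "(real \<times> 'a::real_inner) set \<Rightarrow> (real \<times> 'a) set \<Rightarrow> bool" where
  "hyp_separated S T \<longleftrightarrow> (\<exists>v. minner v v > 0 \<and>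
      (\<forall>p\<in>S. minner p v \<ge> 0) \<and> (\<forall>p\<in>T. minner p v \<le> 0))"

text \<open>Radial projection of a future timelike vector onto the hyperboloid.\<close>
definition hnormalize :: "real \<times> 'a::real_inner \<Rightarrow> real \<times> 'a" where
  "hnormalize p = (1 / sqrt (- minner p p)) *\<^sub>R p"

text \<open>The (geodesically convex) 2-simplex spanned by A, B, C, and its relative interior.\<close>
definition hyp_simplex :: "real \<times> 'a::real_inner \<Rightarrow> real \<times> 'a \<Rightarrow> real \<times> 'a \<Rightarrow> (real \<times> 'a) set" where
  "hyp_simplex A B C = {hnormalize (a *\<^sub>R A + b *\<^sub>R B + c *\<^sub>R C) | a b c.
      a \<ge> 0 \<and> b \<ge> 0 \<and> c \<ge> 0 \<and> a + b + c = 1}"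

definition hyp_simplex_interior :: "real \<times> 'a::real_inner \<Rightarrow> real \<times> 'a \<Rightarrow> real \<times> 'a \<Rightarrow> (real \<times> 'a) set" where
  "hyp_simplex_interior A B C = {hnormalize (a *\<^sub>R A + b *\<^sub>R B + c *\<^sub>R C) | a b c.
      a > 0 \<and> b > 0 \<and> c > 0 \<and> a + b + c = 1}"

definition fermat_point :: "real \<times> 'a::real_inner \<Rightarrow> real \<times> 'a \<Rightarrow> real \<times> 'a \<Rightarrow> real \<times> 'a \<Rightarrow> bool" where
  "fermat_point A B C F \<longleftrightarrow> F \<in> hyp_simplex A B C \<and>
     (\<forall>G \<in> hyp_simplex A B C. hdist F A + hdist F B + hdist F C \<le> hdist G A + hdist G B + hdist G C)"

end

theory Submission
  imports Defs
begin


lemma minner_commute: "minner p q = minner q p"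
  by (simp add: minner_def inner_commute mult.commute)
lemma minner_add_left [simp]: "minner (p + q) r = minner p r + minner q r"
  by (simp add: minner_def inner_add_left algebra_simps)
lemma minner_add_right [simp]: "minner r (p + q) = minner r p + minner r q"
  by (simp add: minner_def inner_add_right algebra_simps)
lemma minner_diff_left [simp]: "minner (p - q) r = minner p r - minner q r"
  by (simp add: minner_def inner_diff_left algebra_simps)
lemma minner_diff_right [simp]: "minner r (p - q) = minner r p - minner r q"
  by (simp add: minner_def inner_diff_right algebra_simps)
lemma minner_minus_left [simp]: "minner (- p) r = - minner p r"
  by (simp add: minner_def)
lemma minner_minus_right [simp]: "minner r (- p) = - minner r p"
  by (simp add: minner_def)
lemma minner_scaleR_left [simp]: "minner (a *\<^sub>R p) r = a * minner p r"
  by (simp add: minner_def algebra_simps)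
lemma minner_scaleR_right [simp]: "minner r (a *\<^sub>R p) = a * minner r p"
  by (simp add: minner_def algebra_simps)
lemma minner_zero_left [simp]: "minner 0 r = 0" by (simp add: minner_def)

lemma hyp_spaceD:
  assumes "p \<in> hyp_space"
  shows "fst p > 0" "minner p p = -1" "snd p \<bullet> snd p = (fst p)\<^sup>2 - 1" "fst p \<ge> 1"
proof -
  show f: "fst p > 0" "minner p p = -1" using assms by (auto simp: hyp_space_def)
  then show s: "snd p \<bullet> snd p = (fst p)\<^sup>2 - 1" by (simp add: minner_def power2_eq_square)
  have "(fst p)\<^sup>2 \<ge> 1" using s inner_ge_zero[of "snd p"] by linarith
  then show "fst p \<ge> 1" using f(1)
    by (rule_tac ccontr) (use power_strict_mono[of "fst p" 1 2] in auto)
qed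

lemma future_lemma:
  assumes F: "F \<in> hyp_space" and x: "minner x x < 0" and xF: "minner x F < 0"
  shows "fst x > 0"
proof (rule ccontr)
  assume "\<not> fst x > 0"
  hence fx: "fst x \<le> 0" by simp
  have cs: "(snd x \<bullet> snd F)\<^sup>2 \<le> (snd x \<bullet> snd x) * (snd F \<bullet> snd F)" by (rule Cauchy_Schwarz_ineq)
  have sF: "snd F \<bullet> snd F = (fst F)\<^sup>2 - 1" "fst F > 0" using hyp_spaceD[OF F] by auto
  have sx: "snd x \<bullet> snd x < (fst x)\<^sup>2" using x by (simp add: minner_def power2_eq_square)
  have lt: "snd x \<bullet> snd F < fst x * fst F" using xF by (simp add: minner_def)
  have "(snd x \<bullet> snd F)\<^sup>2 < (fst x * fst F)\<^sup>2"
  proof -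
    have "(snd x \<bullet> snd x) * (snd F \<bullet> snd F) \<le> (fst x)\<^sup>2 * ((fst F)\<^sup>2 - 1)"
      using sx sF inner_ge_zero[of "snd x"] inner_ge_zero[of "snd F"]
      by (intro mult_mono) auto
    also have "\<dots> \<le> (fst x * fst F)\<^sup>2" by (simp add: power_mult_distrib algebra_simps)
    finally have a: "(snd x \<bullet> snd F)\<^sup>2 \<le> (fst x * fst F)\<^sup>2" using cs by linarith
    show ?thesis
    proof (cases "fst x = 0")
      case True
      then show ?thesis using sx inner_ge_zero[of "snd x"] by simp
    next
      case False
      hence "(fst x)\<^sup>2 > 0" by simp
      hence "(fst x)\<^sup>2 * ((fst F)\<^sup>2 - 1) < (fst x * fst F)\<^sup>2" by (simp add: power_mult_distrib algebra_simps)
      then show ?thesis using cs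
        using \<open>snd x \<bullet> snd x * (snd F \<bullet> snd F) \<le> (fst x)\<^sup>2 * ((fst F)\<^sup>2 - 1)\<close> by linarith
    qed
  qed
  moreover have "fst x * fst F \<le> 0" using fx sF(2) by (simp add: mult_nonpos_nonneg)
  moreover have "(-(fst x * fst F))\<^sup>2 < (-(snd x \<bullet> snd F))\<^sup>2"
    using lt \<open>fst x * fst F \<le> 0\<close> by (intro power_strict_mono) auto
  ultimately show False by simp
qed

lemma minner_hyp_le:
  assumes P: "P \<in> hyp_space" and Q: "Q \<in> hyp_space"
  shows "minner P Q \<le> -1"
proof -
  have cs: "(snd P \<bullet> snd Q)\<^sup>2 \<le> (snd P \<bullet> snd P) * (snd Q \<bullet> snd Q)" by (rule Cauchy_Schwarz_ineq)
  note p = hyp_spaceD[OF P] and q = hyp_spaceD[OF Q]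
  have "snd P \<bullet> snd Q \<le> fst P * fst Q - 1"
  proof (cases "snd P \<bullet> snd Q \<le> 0")
    case True
    have "fst P * fst Q \<ge> 1 * 1" using p q by (intro mult_mono) auto
    then show ?thesis using True by simp
  next
    case False
    have "(snd P \<bullet> snd Q)\<^sup>2 \<le> (fst P * fst Q - 1)\<^sup>2"
    proof -
      have "(snd P \<bullet> snd P) * (snd Q \<bullet> snd Q) = ((fst P)\<^sup>2 - 1) * ((fst Q)\<^sup>2 - 1)" using p q by simp
      also have "\<dots> \<le> (fst P * fst Q - 1)\<^sup>2"
        using sum_squares_ge_zero[of "fst P - fst Q" 0] by (simp add: power2_eq_square algebra_simps)
      finally show ?thesis using cs by linarith
    qed
    moreover have "fst P * fst Q \<ge> 1 * 1" using p q by (intro mult_mono) auto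
    hence "fst P * fst Q - 1 \<ge> 0" by simp
    ultimately show ?thesis using power2_le_imp_le by blast
  qed
  then show ?thesis by (simp add: minner_def)
qed



lemma tangent_nonneg:
  assumes F: "F \<in> hyp_space" and a: "minner F a = 0"
  shows "minner a a \<ge> 0"
proof -
  note f = hyp_spaceD[OF F]
  have cs: "(snd F \<bullet> snd a)\<^sup>2 \<le> (snd F \<bullet> snd F) * (snd a \<bullet> snd a)" by (rule Cauchy_Schwarz_ineq)
  have e: "snd F \<bullet> snd a = fst F * fst a" using a by (simp add: minner_def)
  have "(fst F)\<^sup>2 * (fst a)\<^sup>2 \<le> ((fst F)\<^sup>2 - 1) * (snd a \<bullet> snd a)"
    using cs e f by (simp add: power_mult_distrib)
  also have "\<dots> \<le> (fst F)\<^sup>2 * (snd a \<bullet> snd a)"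
    using inner_ge_zero[of "snd a"] by (simp add: algebra_simps)
  finally have "(fst a)\<^sup>2 \<le> snd a \<bullet> snd a" using f(1) by simp
  then show ?thesis by (simp add: minner_def power2_eq_square)
qed

lemma quad_disc:
  fixes a b c :: real
  assumes "\<And>l. 0 \<le> a + 2*b*l + c*l\<^sup>2"
  shows "b\<^sup>2 \<le> a*c"
proof (cases "c = 0")
  case True
  have "b = 0"
  proof (rule ccontr)
    assume "b \<noteq> 0"
    have "0 \<le> a + 2*b*(-(a+1)/(2*b)) + c*(-(a+1)/(2*b))\<^sup>2" by (rule assms)
    then show False using True \<open>b \<noteq> 0\<close> by (simp add: field_simps)
  qed
  then show ?thesis using True by simp
next
  case False
  have c0: "c \<ge> 0"
  proof (rule ccontr)
    assume "\<not> c \<ge> 0"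
    hence c: "c < 0" by simp
    define l where "l = (\<bar>a\<bar> + 2*\<bar>b\<bar> + 1) / (-c) + 1"
    have "(\<bar>a\<bar> + 2*\<bar>b\<bar> + 1) / (-c) \<ge> 0" using c by (intro divide_nonneg_pos) auto
    hence l1: "l \<ge> 1" by (simp add: l_def)
    have "c*l\<^sup>2 = c*l*l" by (simp add: power2_eq_square)
    have "c * l = -(\<bar>a\<bar> + 2*\<bar>b\<bar> + 1) + c" using c by (simp add: l_def field_simps)
    hence "c * l \<le> -(\<bar>a\<bar> + 2*\<bar>b\<bar> + 1)" using c by simp
    hence "c * l * l \<le> -(\<bar>a\<bar> + 2*\<bar>b\<bar> + 1) * l" using l1 by (intro mult_right_mono) auto
    moreover have "2*b*l \<le> 2*\<bar>b\<bar>*l" using l1 by (intro mult_right_mono) auto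
    moreover have "\<bar>a\<bar> * 1 \<le> \<bar>a\<bar> * l" using l1 by (intro mult_left_mono) auto
    moreover have "0 \<le> a + 2*b*l + c*l\<^sup>2" by (rule assms)
    moreover have "-(\<bar>a\<bar> + 2*\<bar>b\<bar> + 1) * l = -(\<bar>a\<bar>*l) - 2*\<bar>b\<bar>*l - l" by (simp add: algebra_simps)
    ultimately show False using l1 \<open>c*l\<^sup>2 = c*l*l\<close> by linarith
  qed
  hence c: "c > 0" using False by simp
  have "0 \<le> a + 2*b*(-b/c) + c*(-b/c)\<^sup>2" by (rule assms)
  hence "0 \<le> a - b\<^sup>2/c" using c by (simp add: power2_eq_square field_simps)
  then show ?thesis using c by (simp add: field_simps)
qed

lemma tangent_cs:
  assumes F: "F \<in> hyp_space" and a: "minner F a = 0" and b: "minner F b = 0"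
  shows "(minner a b)\<^sup>2 \<le> minner a a * minner b b"
proof -
  have "(minner b a)\<^sup>2 \<le> minner b b * minner a a"
  proof (rule quad_disc)
    fix l :: real
    have "minner F (b + l *\<^sub>R a) = 0" using a b by simp
    hence "minner (b + l *\<^sub>R a) (b + l *\<^sub>R a) \<ge> 0" by (rule tangent_nonneg[OF F])
    then show "0 \<le> minner b b + 2 * minner b a * l + minner a a * l\<^sup>2"
      by (simp add: minner_commute[of a b] algebra_simps power2_eq_square)
  qed
  then show ?thesis by (simp add: minner_commute[of a b] mult.commute)
qed

lemma rcs:
  assumes F: "F \<in> hyp_space" and P: "P \<in> hyp_space" and u: "minner F u = 0"
  shows "(minner u P)\<^sup>2 \<le> minner u u * ((minner F P)\<^sup>2 - 1)"
proof -
  define z where "z = P + minner F P *\<^sub>R F"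
  have Fz: "minner F z = 0" using hyp_spaceD[OF F] by (simp add: z_def)
  have zz: "minner z z = (minner F P)\<^sup>2 - 1"
    using hyp_spaceD[OF F] hyp_spaceD[OF P]
    by (simp add: z_def minner_commute[of P F] power2_eq_square algebra_simps)
  have uz: "minner u z = minner u P" using u by (simp add: z_def minner_commute[of u F])
  show ?thesis using tangent_cs[OF F u Fz] zz uz by simp
qed

lemma hdist_commute: "hdist p q = hdist q p"
  by (simp add: hdist_def minner_commute)

lemma hdist_ge1: "P \<in> hyp_space \<Longrightarrow> Q \<in> hyp_space \<Longrightarrow> - minner P Q \<ge> 1"
  using minner_hyp_le by fastforce

lemma point_hyp:
  assumes F: "F \<in> hyp_space" and u: "minner F u = 0" "minner u u = 1"
    and cs: "c\<^sup>2 - s\<^sup>2 = 1" "c > 0"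
  shows "c *\<^sub>R F + s *\<^sub>R u \<in> hyp_space"
proof -
  have m: "minner (c *\<^sub>R F + s *\<^sub>R u) (c *\<^sub>R F + s *\<^sub>R u) = -1"
    using hyp_spaceD[OF F] u cs by (simp add: minner_commute[of u F] power2_eq_square algebra_simps)
  have mF: "minner (c *\<^sub>R F + s *\<^sub>R u) F < 0"
    using hyp_spaceD[OF F] u cs by (simp add: minner_commute[of u F])
  have "minner (c *\<^sub>R F + s *\<^sub>R u) (c *\<^sub>R F + s *\<^sub>R u) < 0" using m by linarith
  from future_lemma[OF F this mF] have "fst (c *\<^sub>R F + s *\<^sub>R u) > 0" .
  then show ?thesis using m by (simp add: hyp_space_def)
qed

lemma tri_step:
  assumes F: "F \<in> hyp_space" and u: "minner F u = 0" "minner u u = 1"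
    and A: "A \<in> hyp_space" and c: "c \<ge> 1" and s: "s = sqrt (c\<^sup>2 - 1)"
  shows "hdist (c *\<^sub>R F + s *\<^sub>R u) A \<le> arcosh c + hdist F A"
proof -
  define cA where "cA = - minner F A"
  define sA where "sA = sqrt (cA\<^sup>2 - 1)"
  have cA1: "cA \<ge> 1" using hdist_ge1[OF F A] by (simp add: cA_def)
  have "(minner u A)\<^sup>2 \<le> cA\<^sup>2 - 1" using rcs[OF F A u(1)] u(2) by (simp add: cA_def)
  moreover have c2: "cA\<^sup>2 \<ge> 1" using cA1 by (simp add: one_le_power)
  ultimately have "(minner u A)\<^sup>2 \<le> sA\<^sup>2" by (simp add: sA_def)
  hence "\<bar>minner u A\<bar> \<le> sA" using power2_le_imp_le[of "\<bar>minner u A\<bar>" sA] c2 by (simp add: sA_def)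
  hence uA: "- minner u A \<le> sA" by simp
  have s0: "s \<ge> 0" using s one_le_power[OF c, of 2] by simp
  have G: "c *\<^sub>R F + s *\<^sub>R u \<in> hyp_space"
    by (rule point_hyp[OF F u]) (use c s one_le_power[OF c, of 2] in auto)
  have g1: "- minner (c *\<^sub>R F + s *\<^sub>R u) A \<ge> 1" by (rule hdist_ge1[OF G A])
  have "- minner (c *\<^sub>R F + s *\<^sub>R u) A = c * cA - s * minner u A" by (simp add: cA_def)
  also have "\<dots> \<le> c * cA + s * sA" using mult_left_mono[OF uA s0] by simp
  also have "\<dots> = cosh (arcosh c + arcosh cA)"
    using c cA1 by (simp add: cosh_add sinh_arcosh_real s sA_def)
  finally have le: "- minner (c *\<^sub>R F + s *\<^sub>R u) A \<le> cosh (arcosh c + arcosh cA)" .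
  have "hdist (c *\<^sub>R F + s *\<^sub>R u) A \<le> arcosh (cosh (arcosh c + arcosh cA))"
    unfolding hdist_def using le g1
    by (metis arcosh_less_iff_real cosh_real_ge_1 linorder_not_le)
  also have "\<dots> = arcosh c + arcosh cA"
    using c cA1 by (intro arcosh_cosh_real) simp
  finally show ?thesis by (simp add: hdist_def cA_def)
qed

lemma dist_deriv:
  assumes F: "F \<in> hyp_space" and P: "P \<in> hyp_space"
    and c: "- minner F P > 1"
  shows "((\<lambda>t. hdist (cosh t *\<^sub>R F + sinh t *\<^sub>R u) P) has_real_derivative
            (- minner u P / sqrt ((minner F P)\<^sup>2 - 1))) (at 0)"
proof -
  have e: "(\<lambda>t. hdist (cosh t *\<^sub>R F + sinh t *\<^sub>R u) P) =
           (\<lambda>t. arcosh (- (cosh t * minner F P + sinh t * minner u P)))"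
    by (simp add: hdist_def)
  have d1: "((\<lambda>t. - (cosh t * minner F P + sinh t * minner u P)) has_real_derivative
             (- (sinh 0 * minner F P + cosh 0 * minner u P))) (at 0)"
    by (rule derivative_eq_intros refl)+ simp
  have d2: "(arcosh has_real_derivative 1 / sqrt ((- (cosh 0 * minner F P + sinh 0 * minner u P))\<^sup>2 - 1))
      (at (- (cosh 0 * minner F P + sinh 0 * minner u P)))"
    using c by (intro arcosh_real_has_field_derivative) simp
  have "((\<lambda>t. arcosh (- (cosh t * minner F P + sinh t * minner u P))) has_real_derivative
      (1 / sqrt ((- (cosh 0 * minner F P + sinh 0 * minner u P))\<^sup>2 - 1)) * (- (sinh 0 * minner F P + cosh 0 * minner u P))) (at 0)"
    by (rule DERIV_chain2[OF d2 d1])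
  then show ?thesis unfolding e by simp
qed



lemma hnormalize_hyp:
  assumes "fst X > 0" "minner X X < 0"
  shows "hnormalize X \<in> hyp_space"
proof -
  have s: "sqrt (- minner X X) > 0" using assms by simp
  have "minner (hnormalize X) (hnormalize X) = minner X X / (sqrt (- minner X X))\<^sup>2"
    by (simp add: hnormalize_def power2_eq_square)
  also have "\<dots> = -1" using assms by simp
  finally show ?thesis using assms s by (simp add: hyp_space_def hnormalize_def)
qed

lemma hnormalize_id: "X \<in> hyp_space \<Longrightarrow> hnormalize X = X"
  by (simp add: hnormalize_def hyp_space_def)

lemma hnormalize_scale:
  assumes r: "r > 0" shows "hnormalize (r *\<^sub>R X) = hnormalize X"
proof -
  have "- minner (r *\<^sub>R X) (r *\<^sub>R X) = (r * r) * (- minner X X)" by simp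
  hence e: "sqrt (- minner (r *\<^sub>R X) (r *\<^sub>R X)) = r * sqrt (- minner X X)"
    using r by (simp only: real_sqrt_mult real_sqrt_mult_self)
  show ?thesis unfolding hnormalize_def e using r by (cases "sqrt (- minner X X) = 0") auto
qed

lemma minner_comb_le:
  assumes P: "P \<in> hyp_space" and A: "A \<in> hyp_space" and B: "B \<in> hyp_space" and C: "C \<in> hyp_space"
    and abc: "a \<ge> 0" "b \<ge> 0" "c \<ge> 0"
  shows "minner P (a *\<^sub>R A + b *\<^sub>R B + c *\<^sub>R C) \<le> - (a + b + c)"
proof -
  have "a * minner P A \<le> a * (-1)" using minner_hyp_le[OF P A] abc by (intro mult_left_mono) auto
  moreover have "b * minner P B \<le> b * (-1)" using minner_hyp_le[OF P B] abc by (intro mult_left_mono) auto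
  moreover have "c * minner P C \<le> c * (-1)" using minner_hyp_le[OF P C] abc by (intro mult_left_mono) auto
  ultimately show ?thesis by simp
qed

lemma comb_future:
  assumes A: "A \<in> hyp_space" and B: "B \<in> hyp_space" and C: "C \<in> hyp_space"
    and abc: "a \<ge> 0" "b \<ge> 0" "c \<ge> 0" "a + b + c > 0"
  shows "fst (a *\<^sub>R A + b *\<^sub>R B + c *\<^sub>R C) > 0"
    "minner (a *\<^sub>R A + b *\<^sub>R B + c *\<^sub>R C) (a *\<^sub>R A + b *\<^sub>R B + c *\<^sub>R C) \<le> - ((a+b+c)*(a+b+c))"
proof -
  have "fst A > 0" "fst B > 0" "fst C > 0" using A B C by (auto dest: hyp_spaceD)
  hence "a * fst A \<ge> 0" "b * fst B \<ge> 0" "c * fst C \<ge> 0" using abc by auto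
  moreover have "a * fst A > 0 \<or> b * fst B > 0 \<or> c * fst C > 0"
  proof -
    have "a > 0 \<or> b > 0 \<or> c > 0" using abc by linarith
    then show ?thesis using \<open>fst A > 0\<close> \<open>fst B > 0\<close> \<open>fst C > 0\<close> by auto
  qed
  ultimately show "fst (a *\<^sub>R A + b *\<^sub>R B + c *\<^sub>R C) > 0" by auto
  let ?X = "a *\<^sub>R A + b *\<^sub>R B + c *\<^sub>R C"
  have "a * minner A ?X \<le> a * (- (a+b+c))" using minner_comb_le[OF A A B C abc(1-3)] abc by (intro mult_left_mono) auto
  moreover have "b * minner B ?X \<le> b * (- (a+b+c))" using minner_comb_le[OF B A B C abc(1-3)] abc by (intro mult_left_mono) auto
  moreover have "c * minner C ?X \<le> c * (- (a+b+c))" using minner_comb_le[OF C A B C abc(1-3)] abc by (intro mult_left_mono) auto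
  moreover have "minner ?X ?X = a * minner A ?X + b * minner B ?X + c * minner C ?X"
    by (simp only: minner_add_left minner_scaleR_left)
  ultimately show "minner ?X ?X \<le> - ((a+b+c)*(a+b+c))" by (simp add: algebra_simps)
qed

lemma simplex_hyp:
  assumes A: "A \<in> hyp_space" and B: "B \<in> hyp_space" and C: "C \<in> hyp_space"
    and F: "F \<in> hyp_simplex A B C"
  shows "F \<in> hyp_space"
proof -
  obtain a b c where abc: "a \<ge> 0" "b \<ge> 0" "c \<ge> 0" "a + b + c = 1"
    and Fe: "F = hnormalize (a *\<^sub>R A + b *\<^sub>R B + c *\<^sub>R C)"
    using F by (auto simp: hyp_simplex_def)
  note cf = comb_future[OF A B C abc(1-3)]
  show ?thesis unfolding Fe using cf abc by (intro hnormalize_hyp) auto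
qed

lemma scaleR_div_cancel: "(T::real) \<noteq> 0 \<Longrightarrow> T *\<^sub>R ((x/T) *\<^sub>R (v::'a::real_vector)) = x *\<^sub>R v"
proof -
  assume "T \<noteq> 0"
  hence "T * (x/T) = x" by simp
  then show ?thesis by (simp only: scaleR_scaleR)
qed

lemma comb_in_simplex:
  assumes A: "A \<in> hyp_space" and B: "B \<in> hyp_space" and C: "C \<in> hyp_space"
    and F: "F \<in> hyp_simplex A B C" and X: "X \<in> hyp_space"
    and Xe: "X = l *\<^sub>R F + p *\<^sub>R A + q *\<^sub>R B + r *\<^sub>R C"
    and nn: "l \<ge> 0" "p \<ge> 0" "q \<ge> 0" "r \<ge> 0"
  shows "X \<in> hyp_simplex A B C"
proof -
  obtain a b c where abc: "a \<ge> 0" "b \<ge> 0" "c \<ge> 0" "a + b + c = 1"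
    and Fe: "F = hnormalize (a *\<^sub>R A + b *\<^sub>R B + c *\<^sub>R C)"
    using F by (auto simp: hyp_simplex_def)
  define k where "k = 1 / sqrt (- minner (a *\<^sub>R A + b *\<^sub>R B + c *\<^sub>R C) (a *\<^sub>R A + b *\<^sub>R B + c *\<^sub>R C))"
  have k: "k > 0" using comb_future[OF A B C abc(1-3)] abc by (simp add: k_def)
  define a' where "a' = l*k*a + p"
  define b' where "b' = l*k*b + q"
  define c' where "c' = l*k*c + r"
  have nn': "a' \<ge> 0" "b' \<ge> 0" "c' \<ge> 0" using nn abc k by (auto simp: a'_def b'_def c'_def)
  have Fk: "F = k *\<^sub>R (a *\<^sub>R A + b *\<^sub>R B + c *\<^sub>R C)" by (simp add: Fe hnormalize_def k_def)
  have X2: "X = a' *\<^sub>R A + b' *\<^sub>R B + c' *\<^sub>R C"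
    by (simp add: Xe Fk a'_def b'_def c'_def scaleR_add_right scaleR_add_left algebra_simps)
  define T where "T = a' + b' + c'"
  have T: "T > 0"
  proof (rule ccontr)
    assume "\<not> T > 0"
    hence "a' = 0" "b' = 0" "c' = 0" using nn' by (auto simp: T_def)
    hence "X = 0" using X2 by simp
    then show False using hyp_spaceD[OF X] by simp
  qed
  have XT: "X = T *\<^sub>R ((a'/T) *\<^sub>R A + (b'/T) *\<^sub>R B + (c'/T) *\<^sub>R C)"
  proof -
    have T0: "T \<noteq> 0" using \<open>T > 0\<close> by simp
    have "T *\<^sub>R ((a'/T) *\<^sub>R A) = a' *\<^sub>R A" "T *\<^sub>R ((b'/T) *\<^sub>R B) = b' *\<^sub>R B"
      "T *\<^sub>R ((c'/T) *\<^sub>R C) = c' *\<^sub>R C" using scaleR_div_cancel[OF T0] by blast+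
    then show ?thesis by (simp only: X2 scaleR_add_right)
  qed
  have "X = hnormalize X" using hnormalize_id[OF X] by (rule sym)
  also have "\<dots> = hnormalize (T *\<^sub>R ((a'/T) *\<^sub>R A + (b'/T) *\<^sub>R B + (c'/T) *\<^sub>R C))"
    by (rule arg_cong[OF XT])
  also have "\<dots> = hnormalize ((a'/T) *\<^sub>R A + (b'/T) *\<^sub>R B + (c'/T) *\<^sub>R C)"
    by (rule hnormalize_scale[OF T])
  finally have "X = hnormalize ((a'/T) *\<^sub>R A + (b'/T) *\<^sub>R B + (c'/T) *\<^sub>R C)" .
  moreover have sum1: "a'/T + b'/T + c'/T = 1"
  proof -
    have "a'/T + b'/T + c'/T = (a' + b' + c')/T" by (simp add: add_divide_distrib)
    also have "\<dots> = 1" using \<open>T > 0\<close> unfolding T_def by simp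
    finally show ?thesis .
  qed
  ultimately have Xn: "X = hnormalize ((a'/T) *\<^sub>R A + (b'/T) *\<^sub>R B + (c'/T) *\<^sub>R C)" by blast
  have "a'/T \<ge> 0" "b'/T \<ge> 0" "c'/T \<ge> 0" using nn' \<open>T > 0\<close> by simp_all
  then show ?thesis unfolding hyp_simplex_def using Xn sum1 by blast
qed

lemma simplex_swap12_sub: "hyp_simplex A B C \<subseteq> hyp_simplex B A C"
proof
  fix x assume "x \<in> hyp_simplex A B C"
  then obtain a b c where h: "a \<ge> 0" "b \<ge> 0" "c \<ge> 0" "a + b + c = 1"
    "x = hnormalize (a *\<^sub>R A + b *\<^sub>R B + c *\<^sub>R C)" unfolding hyp_simplex_def by blast
  have "x = hnormalize (b *\<^sub>R B + a *\<^sub>R A + c *\<^sub>R C)" using h(5) by (simp add: add_ac)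
  moreover have "b + a + c = 1" using h(4) by simp
  ultimately show "x \<in> hyp_simplex B A C" using h(1-3) unfolding hyp_simplex_def by blast
qed

lemma simplex_swap23_sub: "hyp_simplex A B C \<subseteq> hyp_simplex A C B"
proof
  fix x assume "x \<in> hyp_simplex A B C"
  then obtain a b c where h: "a \<ge> 0" "b \<ge> 0" "c \<ge> 0" "a + b + c = 1"
    "x = hnormalize (a *\<^sub>R A + b *\<^sub>R B + c *\<^sub>R C)" unfolding hyp_simplex_def by blast
  have "x = hnormalize (a *\<^sub>R A + c *\<^sub>R C + b *\<^sub>R B)" using h(5) by (simp add: add_ac)
  moreover have "a + c + b = 1" using h(4) by simp
  ultimately show "x \<in> hyp_simplex A C B" using h(1-3) unfolding hyp_simplex_def by blast
qed

lemma interior_swap12_sub: "hyp_simplex_interior A B C \<subseteq> hyp_simplex_interior B A C"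
proof
  fix x assume "x \<in> hyp_simplex_interior A B C"
  then obtain a b c where h: "a > 0" "b > 0" "c > 0" "a + b + c = 1"
    "x = hnormalize (a *\<^sub>R A + b *\<^sub>R B + c *\<^sub>R C)" unfolding hyp_simplex_interior_def by blast
  have "x = hnormalize (b *\<^sub>R B + a *\<^sub>R A + c *\<^sub>R C)" using h(5) by (simp add: add_ac)
  moreover have "b + a + c = 1" using h(4) by simp
  ultimately show "x \<in> hyp_simplex_interior B A C" using h(1-3) unfolding hyp_simplex_interior_def by blast
qed

lemma interior_swap23_sub: "hyp_simplex_interior A B C \<subseteq> hyp_simplex_interior A C B"
proof
  fix x assume "x \<in> hyp_simplex_interior A B C"
  then obtain a b c where h: "a > 0" "b > 0" "c > 0" "a + b + c = 1"
    "x = hnormalize (a *\<^sub>R A + b *\<^sub>R B + c *\<^sub>R C)" unfolding hyp_simplex_interior_def by blast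
  have "x = hnormalize (a *\<^sub>R A + c *\<^sub>R C + b *\<^sub>R B)" using h(5) by (simp add: add_ac)
  moreover have "a + c + b = 1" using h(4) by simp
  ultimately show "x \<in> hyp_simplex_interior A C B" using h(1-3) unfolding hyp_simplex_interior_def by blast
qed

lemma simplex_swap12: "hyp_simplex A B C = hyp_simplex B A C"
  using simplex_swap12_sub[of A B C] simplex_swap12_sub[of B A C] by (rule equalityI)

lemma simplex_swap23: "hyp_simplex A B C = hyp_simplex A C B"
  using simplex_swap23_sub[of A B C] simplex_swap23_sub[of A C B] by (rule equalityI)

lemma interior_swap12: "hyp_simplex_interior A B C = hyp_simplex_interior B A C"
  using interior_swap12_sub[of A B C] interior_swap12_sub[of B A C] by (rule equalityI)

lemma interior_swap23: "hyp_simplex_interior A B C = hyp_simplex_interior A C B"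
  using interior_swap23_sub[of A B C] interior_swap23_sub[of A C B] by (rule equalityI)

lemma fermat_swap12: "fermat_point A B C F = fermat_point B A C F"
  unfolding fermat_point_def simplex_swap12[of A B C] by (auto simp: algebra_simps)

lemma fermat_swap23: "fermat_point A B C F = fermat_point A C B F"
  unfolding fermat_point_def simplex_swap23[of A B C] by (auto simp: algebra_simps)



definition fsum :: "real \<times> 'a::real_inner \<Rightarrow> real \<times> 'a \<Rightarrow> real \<times> 'a \<Rightarrow> real \<times> 'a \<Rightarrow> real" where
  "fsum A B C X = hdist X A + hdist X B + hdist X C"

lemma descent_witness:
  fixes h L :: "real \<Rightarrow> real"
  assumes h: "(h has_real_derivative D) (at 0)" and D: "D < 0" and L: "(L \<longlongrightarrow> 1) (at_right 0)"
  obtains t where "t > 0" "h t < h 0" "L t > 0"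
proof -
  obtain d where d: "d > 0" "\<And>t. t > 0 \<Longrightarrow> t < d \<Longrightarrow> h 0 > h (0 + t)"
    using DERIV_neg_dec_right[OF h D] by blast
  have e1: "eventually (\<lambda>t. t \<in> {0<..<d}) (at_right 0)" by (rule eventually_at_right_real[OF d(1)])
  have e2: "eventually (\<lambda>t. L t > 0) (at_right 0)" using L by (rule order_tendstoD) simp
  have "eventually (\<lambda>t. t \<in> {0<..<d} \<and> L t > 0) (at_right (0::real))"
    using e1 e2 by (rule eventually_conj)
  then obtain t where "t \<in> {0<..<d}" "L t > 0"
    using eventually_happens[of _ "at_right (0::real)"] by auto
  then show ?thesis using d that by auto
qed

lemma descent:
  assumes A: "A \<in> hyp_space" and B: "B \<in> hyp_space" and C: "C \<in> hyp_space"
    and F: "F \<in> hyp_simplex A B C"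
    and u: "minner F u = 0" "minner u u = 1"
    and ue: "u = k *\<^sub>R F + p *\<^sub>R A + q *\<^sub>R B + r *\<^sub>R C" and pqr: "p \<ge> 0" "q \<ge> 0" "r \<ge> 0"
    and h: "(h has_real_derivative D) (at 0)" and D: "D < 0"
    and h0: "h 0 = fsum A B C F"
    and hle: "\<And>t. t > 0 \<Longrightarrow> fsum A B C (cosh t *\<^sub>R F + sinh t *\<^sub>R u) \<le> h t"
  shows "\<not> fermat_point A B C F"
proof
  assume fp: "fermat_point A B C F"
  have Fh: "F \<in> hyp_space" by (rule simplex_hyp[OF A B C F])
  have L: "((\<lambda>t. cosh t + sinh t * k) \<longlongrightarrow> 1) (at_right 0)"
  proof -
    have "((\<lambda>t::real. cosh t + sinh t * k) \<longlongrightarrow> cosh 0 + sinh 0 * k) (at_right 0)"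
      by (intro tendsto_intros)
    then show ?thesis by simp
  qed
  obtain t where t: "t > 0" "h t < h 0" "cosh t + sinh t * k > 0"
    using descent_witness[OF h D L] by blast
  define G where "G = cosh t *\<^sub>R F + sinh t *\<^sub>R u"
  have Gh: "G \<in> hyp_space" unfolding G_def
    by (rule point_hyp[OF Fh u]) (simp_all add: cosh_square_eq)
  have Ge: "G = (cosh t + sinh t * k) *\<^sub>R F + (sinh t * p) *\<^sub>R A + (sinh t * q) *\<^sub>R B + (sinh t * r) *\<^sub>R C"
    by (simp add: G_def ue scaleR_add_right scaleR_add_left algebra_simps)
  have "G \<in> hyp_simplex A B C"
    by (rule comb_in_simplex[OF A B C F Gh Ge]) (use t pqr in auto)
  hence "fsum A B C F \<le> fsum A B C G" using fp by (simp add: fermat_point_def fsum_def)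
  moreover have "fsum A B C G \<le> h t" using hle[OF t(1)] by (simp add: G_def)
  ultimately show False using t h0 by simp
qed



lemma dir_lemma:
  assumes F: "F \<in> hyp_space" and P: "P \<in> hyp_space" and c: "- minner F P > 1"
  shows "sqrt ((minner F P)\<^sup>2 - 1) > 0"
    "minner F ((1 / sqrt ((minner F P)\<^sup>2 - 1)) *\<^sub>R (P + minner F P *\<^sub>R F)) = 0"
    "minner ((1 / sqrt ((minner F P)\<^sup>2 - 1)) *\<^sub>R (P + minner F P *\<^sub>R F))
            ((1 / sqrt ((minner F P)\<^sup>2 - 1)) *\<^sub>R (P + minner F P *\<^sub>R F)) = 1"
    "\<And>u. minner F u = 0 \<Longrightarrow> minner u P = sqrt ((minner F P)\<^sup>2 - 1) *
        minner u ((1 / sqrt ((minner F P)\<^sup>2 - 1)) *\<^sub>R (P + minner F P *\<^sub>R F))"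
proof -
  have c2: "(minner F P)\<^sup>2 > 1" using one_less_power[OF c, of 2] by simp
  show s: "sqrt ((minner F P)\<^sup>2 - 1) > 0" using c2 by simp
  note f = hyp_spaceD[OF F] and p = hyp_spaceD[OF P]
  show "minner F ((1 / sqrt ((minner F P)\<^sup>2 - 1)) *\<^sub>R (P + minner F P *\<^sub>R F)) = 0"
    using f by simp
  have "minner (P + minner F P *\<^sub>R F) (P + minner F P *\<^sub>R F) = (minner F P)\<^sup>2 - 1"
    using f p by (simp add: minner_commute[of P F] power2_eq_square algebra_simps)
  also have "\<dots> = (sqrt ((minner F P)\<^sup>2 - 1))\<^sup>2" using c2 by simp
  finally have zz: "minner (P + minner F P *\<^sub>R F) (P + minner F P *\<^sub>R F) = (sqrt ((minner F P)\<^sup>2 - 1))\<^sup>2" .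
  show "minner ((1 / sqrt ((minner F P)\<^sup>2 - 1)) *\<^sub>R (P + minner F P *\<^sub>R F))
            ((1 / sqrt ((minner F P)\<^sup>2 - 1)) *\<^sub>R (P + minner F P *\<^sub>R F)) = 1"
    apply (simp only: minner_scaleR_left minner_scaleR_right zz)
    using s by (simp add: power2_eq_square)
  fix u assume u: "minner F u = 0"
  show "minner u P = sqrt ((minner F P)\<^sup>2 - 1) *
        minner u ((1 / sqrt ((minner F P)\<^sup>2 - 1)) *\<^sub>R (P + minner F P *\<^sub>R F))"
    using s u by (simp add: minner_commute[of u F])
qed

lemma hdist_pos_c:
  assumes F: "F \<in> hyp_space" and P: "P \<in> hyp_space" and "hdist F P > 0"
  shows "- minner F P > 1"
proof -
  have "- minner F P \<ge> 1" by (rule hdist_ge1[OF F P])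
  moreover have "- minner F P \<noteq> 1" using assms(3) by (auto simp: hdist_def)
  ultimately show ?thesis by simp
qed

lemma fsum_deriv:
  assumes F: "F \<in> hyp_space" and A: "A \<in> hyp_space" and B: "B \<in> hyp_space" and C: "C \<in> hyp_space"
    and pos: "hdist F A > 0" "hdist F B > 0" "hdist F C > 0"
  shows "((\<lambda>t. fsum A B C (cosh t *\<^sub>R F + sinh t *\<^sub>R u)) has_real_derivative
      (- minner u A / sqrt ((minner F A)\<^sup>2 - 1) - minner u B / sqrt ((minner F B)\<^sup>2 - 1)
       - minner u C / sqrt ((minner F C)\<^sup>2 - 1))) (at 0)"
proof -
  note dA = dist_deriv[OF F A hdist_pos_c[OF F A pos(1)], of u]
  note dB = dist_deriv[OF F B hdist_pos_c[OF F B pos(2)], of u]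
  note dC = dist_deriv[OF F C hdist_pos_c[OF F C pos(3)], of u]
  show ?thesis unfolding fsum_def using DERIV_add[OF DERIV_add[OF dA dB] dC] by simp
qed

lemma edge_not_fermat:
  assumes A: "A \<in> hyp_space" and B: "B \<in> hyp_space" and C: "C \<in> hyp_space"
    and ab: "a \<ge> 0" "b \<ge> 0" "a + b = 1"
    and Fe: "F = hnormalize (a *\<^sub>R A + b *\<^sub>R B + 0 *\<^sub>R C)"
    and pos: "hdist F A > 0" "hdist F B > 0" "hdist F C > 0"
  shows "\<not> fermat_point A B C F"
proof -
  have Fs: "F \<in> hyp_simplex A B C" unfolding hyp_simplex_def Fe using ab by force
  have Fh: "F \<in> hyp_space" by (rule simplex_hyp[OF A B C Fs])
  have a0: "a > 0"
  proof (rule ccontr)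
    assume "\<not> a > 0" hence "a = 0" "b = 1" using ab by auto
    hence "F = B" using Fe hnormalize_id[OF B] by simp
    then show False using pos(2) hyp_spaceD[OF B] by (simp add: hdist_def)
  qed
  have b0: "b > 0"
  proof (rule ccontr)
    assume "\<not> b > 0" hence "b = 0" "a = 1" using ab by auto
    hence "F = A" using Fe hnormalize_id[OF A] by simp
    then show False using pos(1) hyp_spaceD[OF A] by (simp add: hdist_def)
  qed
  note cA = hdist_pos_c[OF Fh A pos(1)] and cB = hdist_pos_c[OF Fh B pos(2)] and cC = hdist_pos_c[OF Fh C pos(3)]
  define sA where "sA = sqrt ((minner F A)\<^sup>2 - 1)"
  define sB where "sB = sqrt ((minner F B)\<^sup>2 - 1)"
  define sC where "sC = sqrt ((minner F C)\<^sup>2 - 1)"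
  define zA where "zA = A + minner F A *\<^sub>R F"
  define zB where "zB = B + minner F B *\<^sub>R F"
  define u where "u = (1 / sC) *\<^sub>R (C + minner F C *\<^sub>R F)"
  note dC = dir_lemma[OF Fh C cC, folded sC_def u_def]
  have sA: "sA > 0" using dir_lemma(1)[OF Fh A cA] by (simp add: sA_def)
  have sB: "sB > 0" using dir_lemma(1)[OF Fh B cB] by (simp add: sB_def)
  have zAA: "minner zA zA = (minner F A)\<^sup>2 - 1" "minner F zA = 0"
    using hyp_spaceD[OF Fh] hyp_spaceD[OF A]
    by (simp_all add: zA_def minner_commute[of A F] power2_eq_square algebra_simps)
  have sA2: "sA\<^sup>2 = (minner F A)\<^sup>2 - 1" using one_less_power[OF cA, of 2] by (simp add: sA_def)
  have zBB: "minner zB zB = (minner F B)\<^sup>2 - 1" "minner F zB = 0"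
    using hyp_spaceD[OF Fh] hyp_spaceD[OF B]
    by (simp_all add: zB_def minner_commute[of B F] power2_eq_square algebra_simps)
  have sB2: "sB\<^sup>2 = (minner F B)\<^sup>2 - 1" using one_less_power[OF cB, of 2] by (simp add: sB_def)
  define X where "X = a *\<^sub>R A + b *\<^sub>R B + 0 *\<^sub>R C"
  define \<kappa> where "\<kappa> = 1 / sqrt (- minner X X)"
  have Xf: "minner X X < 0" using comb_future(2)[OF A B C, of a b 0] ab unfolding X_def by simp
  have \<kappa>: "\<kappa> > 0" using Xf by (simp add: \<kappa>_def)
  have "F = hnormalize X" using Fe by (simp only: X_def)
  hence FX: "F = \<kappa> *\<^sub>R X" by (simp only: hnormalize_def \<kappa>_def)
  have "a *\<^sub>R zA + b *\<^sub>R zB = (1/\<kappa> + a * minner F A + b * minner F B) *\<^sub>R F"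
  proof -
    have "X = (1/\<kappa>) *\<^sub>R F" using FX \<kappa> by simp
    hence "a *\<^sub>R A + b *\<^sub>R B = (1/\<kappa>) *\<^sub>R F" by (simp add: X_def)
    then show ?thesis by (simp add: zA_def zB_def scaleR_add_right scaleR_add_left algebra_simps)
  qed
  moreover have "minner F (a *\<^sub>R zA + b *\<^sub>R zB) = 0" using zAA zBB by simp
  ultimately have "(1/\<kappa> + a * minner F A + b * minner F B) * minner F F = 0" by simp
  hence "1/\<kappa> + a * minner F A + b * minner F B = 0" using hyp_spaceD[OF Fh] by simp
  with \<open>a *\<^sub>R zA + b *\<^sub>R zB = _\<close> have zAB: "a *\<^sub>R zA = - (b *\<^sub>R zB)" by (simp add: eq_neg_iff_add_eq_0)
  have "(a * sA)\<^sup>2 = (b * sB)\<^sup>2"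
  proof -
    have "minner (a *\<^sub>R zA) (a *\<^sub>R zA) = minner (b *\<^sub>R zB) (b *\<^sub>R zB)" using zAB by simp
    hence e: "a*(a*((minner F A)\<^sup>2 - 1)) = b*(b*((minner F B)\<^sup>2 - 1))" using zAA zBB by simp
    have "(a * sA)\<^sup>2 = a*(a*((minner F A)\<^sup>2 - 1))" unfolding power_mult_distrib sA2
      by (simp add: power2_eq_square)
    moreover have "(b * sB)\<^sup>2 = b*(b*((minner F B)\<^sup>2 - 1))" unfolding power_mult_distrib sB2
      by (simp add: power2_eq_square)
    ultimately show ?thesis using e by simp
  qed
  hence asb: "a * sA = b * sB" using a0 b0 sA sB by (simp add: power2_eq_iff_nonneg)
  have uF: "minner F u = 0" using dC(2) by (simp add: u_def)
  have uzA: "minner u A = minner u zA" using uF by (simp add: zA_def minner_commute[of u F])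
  have uzB: "minner u B = minner u zB" using uF by (simp add: zB_def minner_commute[of u F])
  have "a * minner u zA = - (b * minner u zB)"
    using arg_cong[OF zAB, of "minner u"] by simp
  hence axy: "a * minner u zA = - (b * minner u zB)" .
  have "minner u zA / sA = (a * minner u zA) / (a * sA)" using a0 by simp
  also have "\<dots> = - (b * minner u zB) / (b * sB)" by (simp only: axy asb)
  also have "\<dots> = - (minner u zB / sB)" using b0 by simp
  finally have sumAB: "minner u A / sA + minner u B / sB = 0" using uzA uzB by simp
  have uC: "minner u C / sC = 1" using dC(4)[OF uF] dC(1) dC(3) by (simp add: sC_def)
  have der: "((\<lambda>t. fsum A B C (cosh t *\<^sub>R F + sinh t *\<^sub>R u)) has_real_derivative
      (- minner u A / sA - minner u B / sB - minner u C / sC)) (at 0)"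
    using fsum_deriv[OF Fh A B C pos, of u] by (simp add: sA_def sB_def sC_def)
  have Dneg: "- minner u A / sA - minner u B / sB - minner u C / sC < 0"
    using sumAB uC by simp
  have ue: "u = (minner F C / sC) *\<^sub>R F + 0 *\<^sub>R A + 0 *\<^sub>R B + (1 / sC) *\<^sub>R C"
    by (simp add: u_def scaleR_add_right)
  show ?thesis
    by (rule descent[OF A B C Fs uF dC(3) ue _ _ _ der Dneg])
       (use dC(1) in \<open>auto simp: fsum_def sC_def\<close>)
qed



lemma angle_lemma:
  assumes F: "F \<in> hyp_space"
    and n: "minner F n = 0" "minner n n = 1"
    and eB: "minner F eB = 0" "minner eB eB = 1" "minner eB n < -1/2"
    and eC: "minner F eC = 0" "minner eC eC = 1" "minner eC n < -1/2"
  shows "minner eB eC > -1/2"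
proof -
  define \<alpha> where "\<alpha> = - minner eB n"
  define \<gamma> where "\<gamma> = - minner eC n"
  define a where "a = eB + \<alpha> *\<^sub>R n"
  define b where "b = eC + \<gamma> *\<^sub>R n"
  have Fa: "minner F a = 0" "minner F b = 0" using n eB eC by (simp_all add: a_def b_def)
  have aa: "minner a a = 1 - \<alpha>\<^sup>2" using n eB
    by (simp add: a_def \<alpha>_def minner_commute[of n eB] power2_eq_square algebra_simps)
  have bb: "minner b b = 1 - \<gamma>\<^sup>2" using n eC
    by (simp add: b_def \<gamma>_def minner_commute[of n eC] power2_eq_square algebra_simps)
  have ab: "minner a b = minner eB eC - \<alpha> * \<gamma>" using n
    by (simp add: a_def b_def \<alpha>_def \<gamma>_def minner_commute[of n eC] algebra_simps)
  have cs: "(minner a b)\<^sup>2 \<le> (1 - \<alpha>\<^sup>2) * (1 - \<gamma>\<^sup>2)" using tangent_cs[OF F Fa] aa bb by simp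
  have a2: "\<alpha> > 1/2" "\<gamma> > 1/2" using eB eC by (auto simp: \<alpha>_def \<gamma>_def)
  have key: "(1/2 + \<alpha>*\<gamma>)\<^sup>2 - (1 - \<alpha>\<^sup>2) * (1 - \<gamma>\<^sup>2) = \<alpha>\<^sup>2 + \<gamma>\<^sup>2 + \<alpha>*\<gamma> - 3/4"
    by (simp add: power2_eq_square algebra_simps)
  have "\<alpha>\<^sup>2 + \<gamma>\<^sup>2 + \<alpha>*\<gamma> > 3/4"
  proof -
    have "(1/2)*(1/2) < \<alpha>*\<alpha>" "(1/2)*(1/2) < \<gamma>*\<gamma>" "(1/2)*(1/2) < \<alpha>*\<gamma>"
      using mult_strict_mono[of "1/2" \<alpha> "1/2" \<alpha>] mult_strict_mono[of "1/2" \<gamma> "1/2" \<gamma>]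
        mult_strict_mono[of "1/2" \<alpha> "1/2" \<gamma>] a2 by simp_all
    hence "\<alpha>\<^sup>2 > 1/4" "\<gamma>\<^sup>2 > 1/4" "\<alpha>*\<gamma> > 1/4" by (simp_all add: power2_eq_square)
    then show ?thesis by simp
  qed
  hence lt: "(1 - \<alpha>\<^sup>2) * (1 - \<gamma>\<^sup>2) < (1/2 + \<alpha>*\<gamma>)\<^sup>2" using key by simp
  show ?thesis
  proof (rule ccontr)
    assume "\<not> ?thesis"
    hence "minner a b \<le> -(1/2 + \<alpha>*\<gamma>)" using ab by simp
    moreover have "\<alpha>*\<gamma> > 0" using a2 by (intro mult_pos_pos) auto
    ultimately have "1/2 + \<alpha>*\<gamma> \<le> - minner a b" "0 \<le> 1/2 + \<alpha>*\<gamma>" by linarith+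
    hence "(1/2 + \<alpha>*\<gamma>)\<^sup>2 \<le> (- minner a b)\<^sup>2" by (rule power_mono)
    hence "(1/2 + \<alpha>*\<gamma>)\<^sup>2 \<le> (minner a b)\<^sup>2" by simp
    then show False using cs lt by simp
  qed
qed

lemma vertex_lemma:
  assumes F: "F \<in> hyp_space" and P: "P \<in> hyp_space"
    and n: "minner F n = 0" "minner n n = 1"
    and S: "S > 0" and k: "2 * k \<ge> S"
    and side: "S * minner P n - k * minner P F \<le> 0"
  shows "- minner F P > 1"
    "minner ((1 / sqrt ((minner F P)\<^sup>2 - 1)) *\<^sub>R (P + minner F P *\<^sub>R F)) n < -1/2"
proof -
  define c where "c = - minner F P"
  have c1: "c \<ge> 1" using hdist_ge1[OF F P] by (simp add: c_def)
  have k0: "k > 0" using S k by simp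
  have s1: "S * minner P n + k * c \<le> 0" using side by (simp add: c_def minner_commute[of P F])
  have "2 * S * minner P n = 2 * (S * minner P n)" "- (2 * k) * c = 2 * (- (k * c))" by simp_all
  hence "2 * S * minner P n \<le> - (2 * k) * c" using s1 by linarith
  also have "\<dots> \<le> - S * c" using k c1 by (simp add: mult_right_mono)
  finally have "S * (2 * minner P n) \<le> S * (- c)" by simp
  hence m: "2 * minner P n \<le> - c" using S by (simp only: mult_le_cancel_left_pos)
  have r: "(minner n P)\<^sup>2 \<le> c\<^sup>2 - 1" using rcs[OF F P n(1)] n(2) by (simp add: c_def)
  have "c \<le> - (2 * minner P n)" "0 \<le> c" using m c1 by linarith+
  hence "c\<^sup>2 \<le> (- (2 * minner P n))\<^sup>2" by (rule power_mono)
  hence "c\<^sup>2 \<le> (2 * minner P n)\<^sup>2" by simp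
  hence "c\<^sup>2 \<le> 4 * (c\<^sup>2 - 1)" using r by (simp add: power_mult_distrib minner_commute[of n P])
  hence c2: "c\<^sup>2 > 1" by simp
  have "c \<noteq> 1" using c2 by auto
  then show c1': "- minner F P > 1" using c1 by (simp add: c_def)
  note dl = dir_lemma[OF F P c1']
  define s where "s = sqrt ((minner F P)\<^sup>2 - 1)"
  have s: "s > 0" using dl(1) by (simp add: s_def)
  have "s\<^sup>2 = c\<^sup>2 - 1" using c2 by (simp add: s_def c_def)
  hence "s\<^sup>2 < c\<^sup>2" by simp
  moreover have "0 \<le> c" using c1 by simp
  ultimately have sc: "s < c" by (rule power_less_imp_less_base)
  have "minner n P = s * minner n ((1 / s) *\<^sub>R (P + minner F P *\<^sub>R F))"
    using dl(4)[OF n(1)] by (simp add: s_def)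
  hence e: "minner ((1 / s) *\<^sub>R (P + minner F P *\<^sub>R F)) n = minner P n / s"
    using s by (simp add: minner_commute[of n] field_simps)
  have "minner P n / s \<le> -c / (2 * s)" using m s by (simp add: field_simps)
  also have "\<dots> < -1/2" using s sc by (simp add: field_simps)
  finally have lt: "minner P n / s < -1/2" .
  have "minner ((1 / s) *\<^sub>R (P + minner F P *\<^sub>R F)) n < -1/2" by (simp only: e lt)
  then show "minner ((1 / sqrt ((minner F P)\<^sup>2 - 1)) *\<^sub>R (P + minner F P *\<^sub>R F)) n < -1/2"
    unfolding s_def .
qed



lemma far_vertex:
  assumes A: "A \<in> hyp_space" and B: "B \<in> hyp_space" and C: "C \<in> hyp_space"
    and sep: "hyp_separated (hball A (d + arcosh (2 / sqrt 3))) {B, C}"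
    and fp: "fermat_point A B C F"
  shows "hdist F A > d"
proof (rule ccontr)
  assume "\<not> hdist F A > d"
  hence dA: "hdist F A \<le> d" by simp
  have Fs: "F \<in> hyp_simplex A B C" using fp by (simp add: fermat_point_def)
  have Fh: "F \<in> hyp_space" by (rule simplex_hyp[OF A B C Fs])
  obtain v0 where v0: "minner v0 v0 > 0" "\<forall>p\<in>hball A (d + arcosh (2 / sqrt 3)). minner p v0 \<ge> 0"
    "\<forall>p\<in>{B, C}. minner p v0 \<le> 0"
    using sep unfolding hyp_separated_def by blast
  define r where "r = 1 / sqrt (minner v0 v0)"
  have r: "r > 0" using v0(1) by (simp add: r_def)
  define v where "v = r *\<^sub>R v0"
  have vv: "minner v v = 1"
  proof -
    have "minner v v = r * r * minner v0 v0" by (simp add: v_def)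
    also have "\<dots> = 1" using v0(1) by (simp add: r_def)
    finally show ?thesis .
  qed
  have ball: "\<And>p. p \<in> hball A (d + arcosh (2 / sqrt 3)) \<Longrightarrow> minner p v \<ge> 0"
    using v0(2) r by (simp add: v_def)
  have Bv: "minner B v \<le> 0" using v0(3) r by (simp add: v_def mult_nonneg_nonpos)
  have Cv: "minner C v \<le> 0" using v0(3) r by (simp add: v_def mult_nonneg_nonpos)
  define k where "k = minner F v"
  define S where "S = sqrt (1 + k\<^sup>2)"
  have S: "S > 0" unfolding S_def by (simp add: add_pos_nonneg)
  define n where "n = (1/S) *\<^sub>R (v + k *\<^sub>R F)"
  have vF: "minner v F = k" by (simp add: k_def minner_commute)
  have FF: "minner F F = -1" using hyp_spaceD[OF Fh] by simp
  have vT: "minner (v + k *\<^sub>R F) (v + k *\<^sub>R F) = S\<^sup>2"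
  proof -
    have "minner (v + k *\<^sub>R F) (v + k *\<^sub>R F) = 1 + k\<^sup>2"
      using vv vF FF by (simp add: k_def[symmetric] power2_eq_square algebra_simps)
    also have "\<dots> = S\<^sup>2" by (simp add: S_def add_nonneg_nonneg)
    finally show ?thesis .
  qed
  have nF: "minner F n = 0" using FF by (simp add: n_def k_def[symmetric])
  have nn: "minner n n = 1"
  proof -
    have "minner n n = (1/S) * ((1/S) * S\<^sup>2)" unfolding n_def by (simp only: minner_scaleR_left minner_scaleR_right vT)
    also have "\<dots> = 1" using S by (simp add: power2_eq_square)
    finally show ?thesis .
  qed
  have nv: "minner n v = S"
  proof -
    have "minner n v = (1/S) * (1 + k\<^sup>2)" using vv vF by (simp add: n_def power2_eq_square k_def)
    also have "1 + k\<^sup>2 = S\<^sup>2" by (simp add: S_def add_nonneg_nonneg)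
    finally show ?thesis using S by (simp add: power2_eq_square)
  qed
  have vdec: "v = S *\<^sub>R n - k *\<^sub>R F"
  proof -
    have "S *\<^sub>R n = (S * (1/S)) *\<^sub>R (v + k *\<^sub>R F)" by (simp add: n_def)
    also have "\<dots> = v + k *\<^sub>R F" using S by simp
    finally show ?thesis by simp
  qed
  define c0 where "c0 = 2 / sqrt (3::real)"
  define s0 where "s0 = sqrt (c0\<^sup>2 - 1)"
  have sq3: "sqrt (3::real) > 0" "(sqrt (3::real))\<^sup>2 = 3" by simp_all
  have c0sq: "c0\<^sup>2 = 4/3" using sq3 by (simp add: c0_def power_divide)
  have c01: "c0 \<ge> 1"
  proof -
    have "sqrt (3::real) \<le> sqrt (2\<^sup>2)" by (rule real_sqrt_le_mono) simp
    also have "sqrt ((2::real)\<^sup>2) = 2" using real_sqrt_abs[of "2::real"] by simp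
    finally show ?thesis using sq3 by (simp add: c0_def)
  qed
  have s0v: "s0 = 1 / sqrt 3"
  proof -
    have "s0 = sqrt (1/3)" using c0sq by (simp add: s0_def)
    then show ?thesis by (simp add: real_sqrt_divide)
  qed
  have mn: "minner F (-n) = 0" "minner (-n) (-n) = 1" using nF nn by simp_all
  define p where "p = c0 *\<^sub>R F + s0 *\<^sub>R (-n)"
  have ptri: "hdist p A \<le> arcosh c0 + hdist F A"
    unfolding p_def by (rule tri_step[OF Fh mn A c01 s0_def])
  have ph: "p \<in> hyp_space" unfolding p_def
  proof (rule point_hyp[OF Fh mn])
    show "c0\<^sup>2 - s0\<^sup>2 = 1" using c0sq by (simp add: s0v power_divide)
    show "c0 > 0" using c01 by simp
  qed
  have "p \<in> hball A (d + arcosh (2 / sqrt 3))"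
    using ph ptri dA by (simp add: hball_def hdist_commute[of A p] c0_def)
  hence "minner p v \<ge> 0" by (rule ball)
  moreover have "minner p v = c0 * k - s0 * S" using nv by (simp add: p_def k_def)
  ultimately have "(2 / sqrt 3) * k \<ge> (1 / sqrt 3) * S" using s0v by (simp add: c0_def)
  hence "(1 / sqrt 3) * (2 * k) \<ge> (1 / sqrt 3) * S" by simp
  moreover have pos3: "(0::real) < 1 / sqrt 3" by simp
  ultimately have k2: "2 * k \<ge> S" using mult_le_cancel_left_pos[OF pos3, of S "2 * k"] by blast
  have sideB: "S * minner B n - k * minner B F \<le> 0"
    using Bv unfolding vdec by simp
  have sideC: "S * minner C n - k * minner C F \<le> 0"
    using Cv unfolding vdec by simp
  note VB = vertex_lemma[OF Fh B nF nn S k2 sideB]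
  note VC = vertex_lemma[OF Fh C nF nn S k2 sideC]
  define sB where "sB = sqrt ((minner F B)\<^sup>2 - 1)"
  define sC where "sC = sqrt ((minner F C)\<^sup>2 - 1)"
  define eB where "eB = (1 / sB) *\<^sub>R (B + minner F B *\<^sub>R F)"
  define eC where "eC = (1 / sC) *\<^sub>R (C + minner F C *\<^sub>R F)"
  note dB = dir_lemma[OF Fh B VB(1), folded sB_def eB_def]
  note dC = dir_lemma[OF Fh C VC(1), folded sC_def eC_def]
  have eBn: "minner eB n < -1/2" using VB(2) by (simp only: sB_def[symmetric] eB_def[symmetric])
  have eCn: "minner eC n < -1/2" using VC(2) by (simp only: sC_def[symmetric] eC_def[symmetric])
  have ang: "minner eB eC > -1/2"
    by (rule angle_lemma[OF Fh nF nn dB(2) dB(3) eBn dC(2) dC(3) eCn])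
  define w where "w = eB + eC"
  have ww: "minner w w = 2 + 2 * minner eB eC"
    using dB(3) dC(3) by (simp add: w_def minner_commute[of eC eB])
  hence ww1: "minner w w > 1" using ang by simp
  define N where "N = sqrt (minner w w)"
  have N1: "N > 1" using ww1 by (simp add: N_def)
  have N2: "N\<^sup>2 = minner w w" using ww1 by (simp add: N_def)
  define u where "u = (1 / N) *\<^sub>R w"
  have uF: "minner F u = 0" using dB(2) dC(2) by (simp add: u_def w_def)
  have uu: "minner u u = 1"
  proof -
    have "minner u u = (1/N) * ((1/N) * N\<^sup>2)" unfolding u_def by (simp only: minner_scaleR_left minner_scaleR_right N2)
    also have "\<dots> = 1" using N1 by (simp add: power2_eq_square)
    finally show ?thesis .
  qed
  have uw: "minner u eB + minner u eC = N"
  proof -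
    have "minner u eB + minner u eC = minner u w" by (simp add: w_def)
    also have "\<dots> = (1/N) * N\<^sup>2" by (simp add: u_def N2)
    also have "\<dots> = N" using N1 by (simp add: power2_eq_square)
    finally show ?thesis .
  qed
  have uB: "minner u B / sB = minner u eB" using dB(4)[OF uF] dB(1) by simp
  have uC: "minner u C / sC = minner u eC" using dC(4)[OF uF] dC(1) by simp
  define h where "h = (\<lambda>t. (t + hdist F A) + hdist (cosh t *\<^sub>R F + sinh t *\<^sub>R u) B
                             + hdist (cosh t *\<^sub>R F + sinh t *\<^sub>R u) C)"
  have d0: "((\<lambda>t. t + hdist F A) has_real_derivative 1) (at 0)"
    by (rule derivative_eq_intros refl)+ simp
  have der: "(h has_real_derivative (1 + (- minner u B / sB) + (- minner u C / sC))) (at 0)"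
    unfolding h_def sB_def sC_def
    by (rule DERIV_add[OF DERIV_add[OF d0 dist_deriv[OF Fh B VB(1)]] dist_deriv[OF Fh C VC(1)]])
  have Dneg: "1 + (- minner u B / sB) + (- minner u C / sC) < 0"
    using uB uC uw N1 by simp
  have h0: "h 0 = fsum A B C F" by (simp add: h_def fsum_def)
  have hle: "fsum A B C (cosh t *\<^sub>R F + sinh t *\<^sub>R u) \<le> h t" if t: "t > 0" for t
  proof -
    have sh: "sinh t = sqrt ((cosh t)\<^sup>2 - 1)"
      using t by (simp add: cosh_square_eq)
    have "hdist (cosh t *\<^sub>R F + sinh t *\<^sub>R u) A \<le> arcosh (cosh t) + hdist F A"
      by (rule tri_step[OF Fh uF uu A cosh_real_ge_1 sh])
    also have "arcosh (cosh t) = t" using t by (simp add: arcosh_cosh_real)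
    finally show ?thesis by (simp add: fsum_def h_def)
  qed
  have ue: "u = ((minner F B / sB + minner F C / sC) / N) *\<^sub>R F + 0 *\<^sub>R A + (1 / (N * sB)) *\<^sub>R B
              + (1 / (N * sC)) *\<^sub>R C"
    by (simp add: u_def w_def eB_def eC_def scaleR_add_right scaleR_add_left add_divide_distrib algebra_simps)
  have "\<not> fermat_point A B C F"
    by (rule descent[OF A B C Fs uF uu ue _ _ _ der Dneg h0 hle])
       (use N1 dB(1) dC(1) in simp_all)
  then show False using fp by simp
qed

theorem mainTheorem12:
  fixes A B C F :: "real \<times> 'a::euclidean_space" and d :: real
  assumes "d > 0"
    and "A \<in> hyp_space" and "B \<in> hyp_space" and "C \<in> hyp_space"
    and "hyp_separated (hball A (d + arcosh (2 / sqrt 3))) {B, C}"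
    and "hyp_separated (hball B (d + arcosh (2 / sqrt 3))) {A, C}"
    and "hyp_separated (hball C (d + arcosh (2 / sqrt 3))) {A, B}"
    and "fermat_point A B C F"
  shows "F \<in> hyp_simplex_interior A B C \<and> hdist F A > d \<and> hdist F B > d \<and> hdist F C > d"
proof -
  note A = assms(2) and B = assms(3) and C = assms(4) and fp = assms(8)
  have fpBAC: "fermat_point B A C F" using fp fermat_swap12 by blast
  have fpACB: "fermat_point A C B F" using fp fermat_swap23 by blast
  have fpCAB: "fermat_point C A B F" using fpACB fermat_swap12 by blast
  have fpBCA: "fermat_point B C A F" using fpBAC fermat_swap23 by blast
  have dA: "hdist F A > d" by (rule far_vertex[OF A B C assms(5) fp])
  have dB: "hdist F B > d" by (rule far_vertex[OF B A C assms(6) fpBAC])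
  have dC: "hdist F C > d" by (rule far_vertex[OF C A B assms(7) fpCAB])
  have pA: "hdist F A > 0" "hdist F B > 0" "hdist F C > 0" using dA dB dC assms(1) by simp_all
  have Fs: "F \<in> hyp_simplex A B C" using fp by (simp add: fermat_point_def)
  then obtain a b c where abc: "a \<ge> 0" "b \<ge> 0" "c \<ge> 0" "a + b + c = 1"
    and Fe: "F = hnormalize (a *\<^sub>R A + b *\<^sub>R B + c *\<^sub>R C)"
    unfolding hyp_simplex_def by blast
  have a0: "a > 0"
  proof (rule ccontr)
    assume "\<not> a > 0" hence "a = 0" using abc by simp
    hence "F = hnormalize (b *\<^sub>R B + c *\<^sub>R C + 0 *\<^sub>R A)" using Fe by simp
    moreover have "b + c = 1" using \<open>a = 0\<close> abc by simp
    ultimately have "\<not> fermat_point B C A F"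
      using edge_not_fermat[OF B C A abc(2) abc(3) _ _ pA(2) pA(3) pA(1)] by blast
    then show False using fpBCA by simp
  qed
  have b0: "b > 0"
  proof (rule ccontr)
    assume "\<not> b > 0" hence "b = 0" using abc by simp
    hence "F = hnormalize (a *\<^sub>R A + c *\<^sub>R C + 0 *\<^sub>R B)" using Fe by simp
    moreover have "a + c = 1" using \<open>b = 0\<close> abc by simp
    ultimately have "\<not> fermat_point A C B F"
      using edge_not_fermat[OF A C B abc(1) abc(3) _ _ pA(1) pA(3) pA(2)] by blast
    then show False using fpACB by simp
  qed
  have c0: "c > 0"
  proof (rule ccontr)
    assume "\<not> c > 0" hence "c = 0" using abc by simp
    hence "F = hnormalize (a *\<^sub>R A + b *\<^sub>R B + 0 *\<^sub>R C)" using Fe by simp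
    moreover have "a + b = 1" using \<open>c = 0\<close> abc by simp
    ultimately have "\<not> fermat_point A B C F"
      using edge_not_fermat[OF A B C abc(1) abc(2) _ _ pA(1) pA(2) pA(3)] by blast
    then show False using fp by simp
  qed
  have "F \<in> hyp_simplex_interior A B C"
    unfolding hyp_simplex_interior_def using a0 b0 c0 abc(4) Fe by blast
  then show ?thesis using dA dB dC by simp
qed

end
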